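(* Let $G=(V,E)$ and $G'=(V,E')$ be graphs and $\lambda>0$. Suppose every pair in $E\setminus E'$ is $(\ell,d)$ connected in $G'$ and every pair in $E'\setminus E$ is $(\ell,d)$ connected in $G$. Then $$D(f_G\|f_{G'})\;\le\;\frac{2\lambda\,|E\,\Delta\,E'|}{1+\dfrac{(1+(\tanh\lambda)^{\ell})^{d}}{(1-(\tanh\lambda)^{\ell})^{d}}}.$$
   Context: For a graph $G=(V,E)$ and $\lambda>0$, $f_G(\mathbf{x})=\frac{1}{Z}\exp\big(\sum_{(i,j)\in E}\lambda x_ix_j\big)$ on $\{-1,+1\}^V$. $D(f\|g)=\sum_x f(x)\log(f(x)/g(x))$ is the KL-divergence; $E\Delta E'$ is the symmetric difference. Two nodes are $(\ell,d)$ connected if there are $d$ node-disjoint paths between them, each of length at most $\ell$. *)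

theory Defs
  imports "HOL-Analysis.Analysis"
begin

definition graph :: "'a set \<Rightarrow> 'a set set \<Rightarrow> bool" where
  "graph V E \<longleftrightarrow> finite V \<and> (\<forall>e\<in>E. e \<subseteq> V \<and> card e = 2)"

definition configs :: "'a set \<Rightarrow> ('a \<Rightarrow> real) set" where
  "configs V = PiE V (\<lambda>_. {-1, 1})"

text \<open>Energy term  sum over edges (i,j) of lambda x_i x_j, each undirected edge counted once.\<close>
definition ising_energy :: "'a set set \<Rightarrow> real \<Rightarrow> ('a \<Rightarrow> real) \<Rightarrow> real" where
  "ising_energy E lam x = (\<Sum>e\<in>E. lam * (\<Prod>v\<in>e. x v))"

definition partition_fn :: "'a set \<Rightarrow> 'a set set \<Rightarrow> real \<Rightarrow> real" where
  "partition_fn V E lam = (\<Sum>x\<in>configs V. exp (ising_energy E lam x))"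

definition ising :: "'a set \<Rightarrow> 'a set set \<Rightarrow> real \<Rightarrow> ('a \<Rightarrow> real) \<Rightarrow> real" where
  "ising V E lam x = exp (ising_energy E lam x) / partition_fn V E lam"

definition KL :: "'a set \<Rightarrow> (('a \<Rightarrow> real) \<Rightarrow> real) \<Rightarrow> (('a \<Rightarrow> real) \<Rightarrow> real) \<Rightarrow> real" where
  "KL V f g = (\<Sum>x\<in>configs V. f x * ln (f x / g x))"

definition is_path :: "'a set set \<Rightarrow> 'a \<Rightarrow> 'a \<Rightarrow> 'a list \<Rightarrow> bool" where
  "is_path E u v p \<longleftrightarrow> p \<noteq> [] \<and> hd p = u \<and> last p = v \<and> distinct p \<and>
     (\<forall>i. Suc i < length p \<longrightarrow> {p ! i, p ! Suc i} \<in> E)"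

definition internal :: "'a list \<Rightarrow> 'a set" where
  "internal p = set (butlast (tl p))"

definition ld_connected :: "'a set set \<Rightarrow> nat \<Rightarrow> nat \<Rightarrow> 'a \<Rightarrow> 'a \<Rightarrow> bool" where
  "ld_connected E l d u v \<longleftrightarrow>
     (\<exists>ps :: 'a list list. length ps = d \<and> distinct ps \<and>
        (\<forall>p\<in>set ps. is_path E u v p \<and> length p - 1 \<le> l) \<and>
        (\<forall>i<d. \<forall>j<d. i \<noteq> j \<longrightarrow> internal (ps ! i) \<inter> internal (ps ! j) = {}))"

end

theory Submission
  imports Defs
begin

definition mn :: "'a set \<Rightarrow> ('a \<Rightarrow> real) \<Rightarrow> real" where
  "mn e x = (\<Prod>v\<in>e. x v)"

lemma finite_configs: "finite V \<Longrightarrow> finite (configs V)"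
  unfolding configs_def by (intro finite_PiE) auto

lemma configs_nonempty: "configs V \<noteq> {}"
  unfolding configs_def by (simp add: PiE_eq_empty_iff)

lemma configs_val: "x \<in> configs V \<Longrightarrow> v \<in> V \<Longrightarrow> x v = 1 \<or> x v = -1"
  unfolding configs_def by (auto dest: PiE_mem)

lemma configs_out: "x \<in> configs V \<Longrightarrow> v \<notin> V \<Longrightarrow> x v = undefined"
  unfolding configs_def by (auto simp: PiE_def extensional_def)

lemma mn_pm1:
  assumes "x \<in> configs V" "e \<subseteq> V" "finite e"
  shows "mn e x = 1 \<or> mn e x = -1"
  using assms(3,2) unfolding mn_def
proof (induction e rule: finite_induct)
  case empty then show ?case by simp
next
  case (insert a F)
  then have "x a = 1 \<or> x a = -1" using configs_val[OF assms(1)] by auto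
  with insert show ?case by auto
qed

lemma mn_sq: "x \<in> configs V \<Longrightarrow> e \<subseteq> V \<Longrightarrow> finite e \<Longrightarrow> mn e x * mn e x = 1"
  using mn_pm1[of x V e] by auto

lemma exp_pm: "s = 1 \<or> s = -1 \<Longrightarrow> exp (K * s) = cosh K + s * sinh (K::real)"
  by (auto simp: cosh_def sinh_def field_simps)

lemma sum_configs_elim:
  assumes "finite V" "b \<in> V"
  shows "(\<Sum>x\<in>configs V. f x) = (\<Sum>x\<in>configs (V - {b}). f (x(b:=1)) + f (x(b:=-1)))"
proof -
  have V: "V = insert b (V - {b})" using assms by auto
  have "(\<Sum>x\<in>configs V. f x) = (\<Sum>(y,g)\<in>{-1,1} \<times> configs (V-{b}). f (g(b:=y)))"
  proof (rule sum.reindex_bij_witness[of _ "\<lambda>(y,g). g(b := y)" "\<lambda>g. (g b, g(b := undefined))"])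
    fix a assume "a \<in> {-1,1::real} \<times> configs (V - {b})"
    then obtain y g where a: "a = (y,g)" "y \<in> {-1,1}" "g \<in> configs (V-{b})" by auto
    then show "(case a of (y, g) \<Rightarrow> g(b := y)) \<in> configs V"
      using PiE_fun_upd[of y "\<lambda>_. {-1,1::real}" b g "V-{b}"] V unfolding configs_def by auto
    show "(\<lambda>g. (g b, g(b := undefined))) (case a of (y, g) \<Rightarrow> g(b := y)) = a"
      using a configs_out[of g "V-{b}" b] by auto
  next
    fix g assume g: "g \<in> configs V"
    show "(case (g b, g(b := undefined)) of (y, g) \<Rightarrow> g(b := y)) = g" by simp
    have "g b \<in> {-1,1}" using configs_val[OF g assms(2)] by auto
    moreover have "g(b := undefined) \<in> configs (V - {b})"
      using fun_upd_in_PiE[of b "V-{b}" g "\<lambda>_. {-1,1::real}"] g V unfolding configs_def by auto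
    ultimately show "(g b, g(b := undefined)) \<in> {-1,1} \<times> configs (V - {b})" by auto
  qed simp
  also have "\<dots> = (\<Sum>y\<in>{-1,1}. \<Sum>g\<in>configs (V-{b}). f (g(b:=y)))"
    by (subst sum.cartesian_product) auto
  also have "\<dots> = (\<Sum>g\<in>configs (V-{b}). \<Sum>y\<in>{-1,1}. f (g(b:=y)))"
    by (rule sum.swap)
  also have "\<dots> = (\<Sum>x\<in>configs (V - {b}). f (x(b:=1)) + f (x(b:=-1)))"
    by (simp add: add.commute)
  finally show ?thesis .
qed

lemma sum_configs_monomial:
  assumes "finite V"
  shows "(\<Sum>x\<in>configs V. (\<Prod>v\<in>V. x v ^ k v)) \<ge> 0"
proof -
  have "(\<Sum>x\<in>configs V. (\<Prod>v\<in>V. x v ^ k v)) = (\<Prod>v\<in>V. \<Sum>y\<in>{-1,1::real}. y ^ k v)"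
    unfolding configs_def by (subst prod_sum_PiE) (use assms in auto)
  also have "\<dots> \<ge> 0"
  proof (rule prod_nonneg)
    fix v
    show "0 \<le> (\<Sum>y\<in>{-1,1::real}. y ^ k v)"
      by (cases "even (k v)") auto
  qed
  finally show ?thesis .
qed

lemma mn_as_monomial:
  assumes "e \<subseteq> V" "finite V"
  shows "mn e x = (\<Prod>v\<in>V. x v ^ (if v \<in> e then 1 else 0))"
proof -
  have "(\<Prod>v\<in>V. x v ^ (if v \<in> e then 1 else 0)) = (\<Prod>v\<in>V. if v \<in> e then x v else 1)"
    by (rule prod.cong) auto
  also have "\<dots> = prod x (V \<inter> e)" using prod.inter_restrict[OF assms(2)] by metis
  also have "V \<inter> e = e" using assms by auto
  finally show ?thesis unfolding mn_def by simp
qed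

lemma gks1:
  assumes "finite V" "finite E" "\<forall>e\<in>E. e \<subseteq> V" "\<forall>e\<in>E. K e \<ge> 0"
  shows "(\<Sum>x\<in>configs V. (\<Prod>v\<in>V. x v ^ k v) * exp (\<Sum>e\<in>E. K e * mn e x)) \<ge> 0"
  using assms(2,3,4)
proof (induction E arbitrary: k rule: finite_induct)
  case empty
  then show ?case using sum_configs_monomial[OF assms(1)] by simp
next
  case (insert e F)
  let ?k' = "\<lambda>v. k v + (if v \<in> e then 1 else 0)"
  have eV: "e \<subseteq> V" using insert by auto
  have fe: "finite e" using eV assms(1) finite_subset by blast
  have eq: "(\<Prod>v\<in>V. x v ^ k v) * exp (\<Sum>e\<in>insert e F. K e * mn e x)
      = cosh (K e) * ((\<Prod>v\<in>V. x v ^ k v) * exp (\<Sum>e\<in>F. K e * mn e x))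
        + sinh (K e) * ((\<Prod>v\<in>V. x v ^ ?k' v) * exp (\<Sum>e\<in>F. K e * mn e x))"
    if x: "x \<in> configs V" for x
  proof -
    have "exp (\<Sum>e\<in>insert e F. K e * mn e x) = exp (K e * mn e x) * exp (\<Sum>e\<in>F. K e * mn e x)"
      using insert by (simp add: exp_add)
    also have "exp (K e * mn e x) = cosh (K e) + mn e x * sinh (K e)"
      using exp_pm mn_pm1[OF x eV fe] by blast
    also have "mn e x * (\<Prod>v\<in>V. x v ^ k v) = (\<Prod>v\<in>V. x v ^ ?k' v)"
      unfolding mn_as_monomial[OF eV assms(1)] by (simp add: power_add prod.distrib[symmetric] mult.commute)
    ultimately show ?thesis by (simp add: algebra_simps)
  qed
  have "(\<Sum>x\<in>configs V. (\<Prod>v\<in>V. x v ^ k v) * exp (\<Sum>e\<in>insert e F. K e * mn e x))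
     = cosh (K e) * (\<Sum>x\<in>configs V. (\<Prod>v\<in>V. x v ^ k v) * exp (\<Sum>e\<in>F. K e * mn e x))
        + sinh (K e) * (\<Sum>x\<in>configs V. (\<Prod>v\<in>V. x v ^ ?k' v) * exp (\<Sum>e\<in>F. K e * mn e x))"
    by (simp add: eq sum.distrib sum_distrib_left cong: sum.cong)
  also have "\<dots> \<ge> 0"
    using insert by (intro add_nonneg_nonneg mult_nonneg_nonneg) (auto intro: less_imp_le)
  finally show ?case .
qed

lemma energy_mn: "ising_energy E lam x = (\<Sum>e\<in>E. lam * mn e x)"
  unfolding ising_energy_def mn_def by simp

definition tw :: "'a set \<Rightarrow> ('a \<Rightarrow> real) \<Rightarrow> ('a \<Rightarrow> real) \<Rightarrow> ('a \<Rightarrow> real)" where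
  "tw V x z = restrict (\<lambda>v. x v * z v) V"

lemma tw_in: "x \<in> configs V \<Longrightarrow> z \<in> configs V \<Longrightarrow> tw V x z \<in> configs V"
proof -
  assume x: "x \<in> configs V" and z: "z \<in> configs V"
  have "\<And>v. v \<in> V \<Longrightarrow> x v * z v \<in> {-1,1}"
    using configs_val[OF x] configs_val[OF z] by fastforce
  then show ?thesis unfolding tw_def configs_def by auto
qed

lemma tw_tw: "x \<in> configs V \<Longrightarrow> z \<in> configs V \<Longrightarrow> tw V x (tw V x z) = z"
proof
  fix v assume x: "x \<in> configs V" and z: "z \<in> configs V"
  show "tw V x (tw V x z) v = z v"
  proof (cases "v \<in> V")
    case True
    then show ?thesis using configs_val[OF x True] unfolding tw_def by auto
  next
    case False
    then show ?thesis using configs_out[OF z False] unfolding tw_def by auto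
  qed
qed

lemma mn_tw: "e \<subseteq> V \<Longrightarrow> mn e (tw V x z) = mn e x * mn e z"
  unfolding mn_def tw_def by (simp add: prod.distrib[symmetric] subset_iff cong: prod.cong)

lemma reindex_tw:
  assumes "x \<in> configs V"
  shows "(\<Sum>y\<in>configs V. F y) = (\<Sum>z\<in>configs V. F (tw V x z))"
proof (rule sum.reindex_bij_witness[of _ "tw V x" "tw V x"])
  fix a assume a: "a \<in> configs V"
  show "tw V x (tw V x a) = a" by (rule tw_tw[OF assms a])
  show "tw V x a \<in> configs V" by (rule tw_in[OF assms a])
  show "F (tw V x (tw V x a)) = F a" by (simp add: tw_tw[OF assms a])
next
  fix a assume a: "a \<in> configs V"
  show "tw V x (tw V x a) = a" by (rule tw_tw[OF assms a])
  show "tw V x a \<in> configs V" by (rule tw_in[OF assms a])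
qed

lemma gks2:
  assumes V: "finite V" and E: "finite E" "\<forall>e\<in>E. e \<subseteq> V" and lam: "lam \<ge> 0"
    and A: "A \<subseteq> V" and B: "B \<subseteq> V"
  shows "(\<Sum>x\<in>configs V. mn A x * exp (ising_energy E lam x)) * (\<Sum>x\<in>configs V. mn B x * exp (ising_energy E lam x))
         \<le> (\<Sum>x\<in>configs V. exp (ising_energy E lam x)) * (\<Sum>x\<in>configs V. mn A x * mn B x * exp (ising_energy E lam x))"
proof -
  define C where "C = configs V"
  define w where "w x = exp (ising_energy E lam x)" for x
  define a where "a = mn A"
  define b where "b = mn B"
  have fA: "finite A" and fB: "finite B" using A B V finite_subset by auto
  define Z where "Z = (\<Sum>x\<in>C. w x)"
  define Na where "Na = (\<Sum>x\<in>C. a x * w x)"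
  define Nb where "Nb = (\<Sum>x\<in>C. b x * w x)"
  define Nab where "Nab = (\<Sum>x\<in>C. a x * b x * w x)"
  have pt: "(a x - a (tw V x z)) * (b x - b (tw V x z)) * w x * w (tw V x z)
      = (1 - a z) * (1 - b z) * (a x * b x * exp (\<Sum>e\<in>E. (lam * (1 + mn e z)) * mn e x))"
    if x: "x \<in> C" and z: "z \<in> C" for x z
  proof -
    have "w x * w (tw V x z) = exp (\<Sum>e\<in>E. (lam * (1 + mn e z)) * mn e x)"
      unfolding w_def energy_mn exp_add[symmetric] sum.distrib[symmetric]
      using E(2) by (intro arg_cong[where f=exp] sum.cong) (auto simp: mn_tw algebra_simps)
    moreover have "a (tw V x z) = a x * a z" "b (tw V x z) = b x * b z"
      unfolding a_def b_def using mn_tw A B by auto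
    ultimately show ?thesis by (simp add: algebra_simps)
  qed
  have key: "0 \<le> (\<Sum>x\<in>C. \<Sum>y\<in>C. (a x - a y) * (b x - b y) * w x * w y)"
  proof -
    have "(\<Sum>x\<in>C. \<Sum>y\<in>C. (a x - a y) * (b x - b y) * w x * w y)
        = (\<Sum>x\<in>C. \<Sum>z\<in>C. (1 - a z) * (1 - b z) * (a x * b x * exp (\<Sum>e\<in>E. (lam * (1 + mn e z)) * mn e x)))"
    proof (rule sum.cong[OF refl])
      fix x assume x: "x \<in> C"
      show "(\<Sum>y\<in>C. (a x - a y) * (b x - b y) * w x * w y)
          = (\<Sum>z\<in>C. (1 - a z) * (1 - b z) * (a x * b x * exp (\<Sum>e\<in>E. (lam * (1 + mn e z)) * mn e x)))"
        unfolding C_def using x unfolding C_def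
        by (subst reindex_tw[OF x[unfolded C_def]]) (intro sum.cong[OF refl] pt[unfolded C_def], auto)
    qed
    also have "\<dots> = (\<Sum>z\<in>C. (1 - a z) * (1 - b z) * (\<Sum>x\<in>C. a x * b x * exp (\<Sum>e\<in>E. (lam * (1 + mn e z)) * mn e x)))"
      by (subst sum.swap) (simp add: sum_distrib_left)
    also have "\<dots> \<ge> 0"
    proof (rule sum_nonneg)
      fix z assume z: "z \<in> C"
      have az: "a z \<le> 1" "b z \<le> 1" unfolding a_def b_def
        using mn_pm1[OF z[unfolded C_def] A fA] mn_pm1[OF z[unfolded C_def] B fB] by auto
      have Kp: "\<forall>e\<in>E. lam * (1 + mn e z) \<ge> 0"
      proof
        fix e assume "e \<in> E"
        then have "e \<subseteq> V" "finite e" using E(2) V finite_subset[of e V] by auto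
        then have "mn e z \<ge> -1" using mn_pm1[OF z[unfolded C_def], of e] by auto
        then show "lam * (1 + mn e z) \<ge> 0" using lam by simp
      qed
      have "(\<Sum>x\<in>C. a x * b x * exp (\<Sum>e\<in>E. (lam * (1 + mn e z)) * mn e x))
          = (\<Sum>x\<in>configs V. (\<Prod>v\<in>V. x v ^ (\<lambda>v. (if v \<in> A then 1 else 0) + (if v \<in> B then 1 else 0)) v) * exp (\<Sum>e\<in>E. (lam * (1 + mn e z)) * mn e x))"
        unfolding C_def a_def b_def mn_as_monomial[OF A V] mn_as_monomial[OF B V]
        by (simp add: power_add prod.distrib)
      also have "\<dots> \<ge> 0" by (rule gks1[OF V E(1) E(2) Kp])
      finally show "0 \<le> (1 - a z) * (1 - b z) * (\<Sum>x\<in>C. a x * b x * exp (\<Sum>e\<in>E. (lam * (1 + mn e z)) * mn e x))"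
        using az by (intro mult_nonneg_nonneg) auto
    qed
    finally show ?thesis .
  qed
  have exp: "(\<Sum>x\<in>C. \<Sum>y\<in>C. (a x - a y) * (b x - b y) * w x * w y) = 2 * Z * Nab - 2 * Na * Nb"
  proof -
    have "(\<Sum>x\<in>C. \<Sum>y\<in>C. (a x - a y) * (b x - b y) * w x * w y)
       = (\<Sum>x\<in>C. \<Sum>y\<in>C. (a x * b x * w x) * w y - (a x * w x) * (b y * w y) - (b x * w x) * (a y * w y) + w x * (a y * b y * w y))"
      by (simp add: algebra_simps)
    also have "\<dots> = (\<Sum>x\<in>C. (a x * b x * w x) * Z - (a x * w x) * Nb - (b x * w x) * Na + w x * Nab)"
      unfolding Z_def Na_def Nb_def Nab_def
      by (simp add: sum.distrib sum_subtractf sum_distrib_left)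
    also have "\<dots> = Nab * Z - Na * Nb - Nb * Na + Z * Nab"
      unfolding Z_def Na_def Nb_def Nab_def
      by (simp add: sum.distrib sum_subtractf sum_distrib_right)
    finally show ?thesis by (simp add: algebra_simps)
  qed
  from key exp have "Na * Nb \<le> Z * Nab" by simp
  then show ?thesis unfolding Na_def Nb_def Z_def Nab_def a_def b_def w_def C_def .
qed

definition Zs :: "'a set \<Rightarrow> 'a set set \<Rightarrow> real \<Rightarrow> (('a \<Rightarrow> real) \<Rightarrow> real) \<Rightarrow> real" where
  "Zs V E lam g = (\<Sum>x\<in>configs V. g x * exp (ising_energy E lam x))"

definition corr :: "'a set \<Rightarrow> 'a set set \<Rightarrow> real \<Rightarrow> 'a set \<Rightarrow> real" where
  "corr V E lam A = Zs V E lam (mn A) / Zs V E lam (\<lambda>_. 1)"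

lemma Zs_pos: "finite V \<Longrightarrow> Zs V E lam (\<lambda>_. 1) > 0"
  unfolding Zs_def using finite_configs configs_nonempty by (intro sum_pos) auto

lemma Zs_add_edge:
  assumes "finite E" "e \<notin> E" "e \<subseteq> V" "finite V"
  shows "Zs V (insert e E) lam g = cosh lam * Zs V E lam g + sinh lam * Zs V E lam (\<lambda>x. g x * mn e x)"
proof -
  have fe: "finite e" using assms finite_subset by auto
  have "g x * exp (ising_energy (insert e E) lam x) = cosh lam * (g x * exp (ising_energy E lam x))
        + sinh lam * (g x * mn e x * exp (ising_energy E lam x))" if x: "x \<in> configs V" for x
  proof -
    have "exp (ising_energy (insert e E) lam x) = exp (lam * mn e x) * exp (ising_energy E lam x)"
      using assms by (simp add: energy_mn exp_add[symmetric])
    also have "exp (lam * mn e x) = cosh lam + mn e x * sinh lam"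
      using exp_pm mn_pm1[OF x assms(3) fe] by blast
    finally show ?thesis by (simp add: algebra_simps)
  qed
  then show ?thesis unfolding Zs_def
    by (simp add: sum.distrib sum_distrib_left cong: sum.cong)
qed

lemma corr_mono1:
  assumes V: "finite V" and E: "finite E" "\<forall>e\<in>E. e \<subseteq> V" and e: "e \<notin> E" "e \<subseteq> V"
    and lam: "lam \<ge> 0" and A: "A \<subseteq> V"
  shows "corr V E lam A \<le> corr V (insert e E) lam A"
proof -
  define Z where "Z = Zs V E lam (\<lambda>_. 1)"
  define Na where "Na = Zs V E lam (mn A)"
  define Ne where "Ne = Zs V E lam (mn e)"
  define Nae where "Nae = Zs V E lam (\<lambda>x. mn A x * mn e x)"
  have g: "Na * Ne \<le> Z * Nae"
    using gks2[OF V E lam A e(2)] unfolding Z_def Na_def Ne_def Nae_def Zs_def by simp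
  have Z': "Zs V (insert e E) lam (\<lambda>_. 1) = cosh lam * Z + sinh lam * Ne"
    using Zs_add_edge[OF E(1) e V, of lam "\<lambda>_. 1"] unfolding Z_def Ne_def by simp
  have Na': "Zs V (insert e E) lam (mn A) = cosh lam * Na + sinh lam * Nae"
    using Zs_add_edge[OF E(1) e V, of lam "mn A"] unfolding Na_def Nae_def by simp
  have Zp: "Z > 0" unfolding Z_def using Zs_pos[OF V] .
  have Zp': "cosh lam * Z + sinh lam * Ne > 0" using Zs_pos[OF V, of "insert e E" lam] Z' by simp
  have s: "sinh lam \<ge> 0" using lam by simp
  have "Na * (cosh lam * Z + sinh lam * Ne) \<le> (cosh lam * Na + sinh lam * Nae) * Z"
    using mult_left_mono[OF g s] by (simp add: algebra_simps)
  then have "Na / Z \<le> (cosh lam * Na + sinh lam * Nae) / (cosh lam * Z + sinh lam * Ne)"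
    using Zp Zp' by (simp add: divide_simps)
  then show ?thesis unfolding corr_def Z' Na' unfolding Z_def Na_def .
qed

lemma corr_mono:
  assumes V: "finite V" and E: "finite E" "\<forall>e\<in>E. e \<subseteq> V" and H: "H \<subseteq> E"
    and lam: "lam \<ge> 0" and A: "A \<subseteq> V"
  shows "corr V H lam A \<le> corr V E lam A"
proof -
  have "finite F \<Longrightarrow> F \<subseteq> E \<Longrightarrow> corr V H lam A \<le> corr V (H \<union> F) lam A" for F
  proof (induction F rule: finite_induct)
    case empty then show ?case by simp
  next
    case (insert e F)
    show ?case
    proof (cases "e \<in> H")
      case True
      then have "H \<union> insert e F = H \<union> F" by auto
      then show ?thesis using insert by simp
    next
      case False
      have fin: "finite (H \<union> F)" using E H insert finite_subset by auto
      have "corr V (H \<union> F) lam A \<le> corr V (insert e (H \<union> F)) lam A"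
        using corr_mono1[OF V fin _ _ _ lam A, of e] insert False H E by auto
      then show ?thesis using insert by simp
    qed
  qed
  from this[of "E - H"] H E show ?thesis by (simp add: Un_absorb1 Un_Diff_cancel)
qed

fun pathw :: "real \<Rightarrow> real \<Rightarrow> ('a \<Rightarrow> real) \<Rightarrow> 'a \<Rightarrow> 'a list \<Rightarrow> real" where
  "pathw t s x a [] = 1"
| "pathw t s x a (b#r) = (1 + s * (x a * x b)) * pathw t t x b r"

lemma pathw_upd: "c \<notin> set (a#r) \<Longrightarrow> pathw t s (x(c:=y)) a r = pathw t s x a r"
  by (induction r arbitrary: a s) auto

lemma path_elim:
  assumes "finite V" "distinct (a#ws)" "ws \<noteq> []" "set (a#ws) \<subseteq> V"
    "\<forall>x y \<sigma>. y \<in> set (butlast ws) \<longrightarrow> g (x(y:=\<sigma>)) = g x"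
  shows "(\<Sum>x\<in>configs V. g x * pathw t s x a ws)
       = 2^(length ws - 1) * (\<Sum>x\<in>configs (V - set (butlast ws)). g x * (1 + s * t^(length ws - 1) * (x a * x (last ws))))"
  using assms
proof (induction ws arbitrary: a s V)
  case Nil then show ?case by simp
next
  case (Cons b r)
  show ?case
  proof (cases r)
    case Nil
    then show ?thesis by (simp add: algebra_simps)
  next
    case (Cons c r')
    have bV: "b \<in> V" using Cons.prems by auto
    have ab: "a \<noteq> b" "c \<noteq> b" "b \<notin> set r'" using Cons.prems Cons by auto
    have bb: "b \<in> set (butlast (b#r))" using \<open>r = c#r'\<close> by simp
    have gind: "g (x(b:=\<sigma>)) = g x" for x \<sigma> using Cons.prems(5) bb by blast
    have F: "g (x(b:=\<sigma>)) * pathw t s (x(b:=\<sigma>)) a (b#r)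
        = g x * ((1 + s * (x a * \<sigma>)) * ((1 + t * (\<sigma> * x c)) * pathw t t x c r'))" for x \<sigma>
      using ab by (simp add: Cons gind pathw_upd)
    have "(\<Sum>x\<in>configs V. g x * pathw t s x a (b#r))
        = (\<Sum>x\<in>configs (V - {b}). 2 * (g x * pathw t (s*t) x a r))"
      unfolding sum_configs_elim[OF Cons.prems(1) bV] F
      by (intro sum.cong refl) (simp add: Cons algebra_simps)
    also have "\<dots> = 2 * (\<Sum>x\<in>configs (V - {b}). g x * pathw t (s*t) x a r)"
      by (simp add: sum_distrib_left)
    also have "(\<Sum>x\<in>configs (V - {b}). g x * pathw t (s*t) x a r)
       = 2^(length r - 1) * (\<Sum>x\<in>configs (V - {b} - set (butlast r)). g x * (1 + (s*t) * t^(length r - 1) * (x a * x (last r))))"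
    proof (rule Cons.IH)
      show "finite (V - {b})" using Cons.prems by auto
      show "distinct (a # r)" using Cons.prems by auto
      show "r \<noteq> []" using Cons by auto
      show "set (a # r) \<subseteq> V - {b}" using Cons.prems ab Cons by auto
      have "set (butlast r) \<subseteq> set (butlast (b#r))" using \<open>r = c#r'\<close> by auto
      then show "\<forall>x y \<sigma>. y \<in> set (butlast r) \<longrightarrow> g (x(y := \<sigma>)) = g x"
        using Cons.prems(5) by blast
    qed
    also have "V - {b} - set (butlast r) = V - set (butlast (b#r))" using Cons by auto
    finally show ?thesis using Cons by (simp add: algebra_simps)
  qed
qed

lemma path_shape:
  assumes "p \<noteq> []" "hd p = u" "last p = v" "u \<noteq> v"
  shows "\<exists>m. p = u # m @ [v]"
proof -
  obtain r where p: "p = u # r" using assms by (cases p) auto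
  have "r \<noteq> []" using assms p by auto
  have lr: "last r = v" using assms p \<open>r \<noteq> []\<close> by simp
  have "r = butlast r @ [v]" by (metis append_butlast_last_id lr \<open>r \<noteq> []\<close>)
  then show ?thesis using p by blast
qed

definition ispth :: "'a set \<Rightarrow> 'a \<Rightarrow> 'a \<Rightarrow> 'a list \<Rightarrow> bool" where
  "ispth V u v p \<longleftrightarrow> distinct p \<and> p \<noteq> [] \<and> hd p = u \<and> last p = v \<and> set p \<subseteq> V"

lemma ispth_facts:
  assumes "ispth V u v p" "u \<noteq> v"
  shows "u \<notin> internal p" "v \<notin> internal p" "set p = insert u (insert v (internal p))"
    "tl p \<noteq> []" "last (tl p) = v" "distinct (u # tl p)" "set (u # tl p) = set p"
    "length p \<ge> 2" "internal p \<subseteq> V" "u \<in> V" "v \<in> V"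
proof -
  have pa: "p \<noteq> []" "hd p = u" "last p = v" using assms(1) unfolding ispth_def by auto
  obtain m where p: "p = u # m @ [v]" using path_shape[OF pa assms(2)] by blast
  have d0: "distinct p" "set p \<subseteq> V" using assms(1) unfolding ispth_def by auto
  have d: "distinct (u # m @ [v])" "set (u # m @ [v]) \<subseteq> V" using d0 unfolding p .
  have i: "internal p = set m" unfolding p internal_def by simp
  show "u \<notin> internal p" "v \<notin> internal p" using d unfolding i by auto
  show "set p = insert u (insert v (internal p))" unfolding i by (simp add: p)
  show "tl p \<noteq> []" unfolding p by simp
  show "last (tl p) = v" unfolding p by simp
  show "distinct (u # tl p)" using d unfolding p by simp
  show "set (u # tl p) = set p" unfolding p by simp
  show "length p \<ge> 2" unfolding p by simp
  show "internal p \<subseteq> V" "u \<in> V" "v \<in> V" using d unfolding i by auto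
qed

lemma multi_elim:
  assumes "finite V" "u \<noteq> v" "distinct ps"
    "\<forall>p\<in>set ps. ispth V u v p"
    "\<forall>p\<in>set ps. \<forall>q\<in>set ps. p \<noteq> q \<longrightarrow> internal p \<inter> internal q = {}"
    "\<forall>x y \<sigma>. y \<in> (\<Union>p\<in>set ps. internal p) \<longrightarrow> g (x(y:=\<sigma>)) = g x"
  shows "(\<Sum>x\<in>configs V. g x * (\<Prod>p\<leftarrow>ps. pathw t t x u (tl p)))
       = 2^(\<Sum>p\<leftarrow>ps. length p - 2) * (\<Sum>x\<in>configs (V - (\<Union>p\<in>set ps. internal p)).
            g x * (\<Prod>p\<leftarrow>ps. 1 + t^(length p - 1) * (x u * x v)))"
  using assms
proof (induction ps arbitrary: V g)
  case Nil then show ?case by simp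
next
  case (Cons p ps)
  have pp: "ispth V u v p" using Cons.prems by auto
  note pf = ispth_facts[OF pp Cons.prems(2)]
  define I where "I = internal p"
  define J where "J = (\<Union>q\<in>set ps. internal q)"
  have pnot: "p \<notin> set ps" using Cons.prems by auto
  have qfacts: "\<And>q. q \<in> set ps \<Longrightarrow> set q \<inter> I = {}"
  proof -
    fix q assume q: "q \<in> set ps"
    have qq: "ispth V u v q" using Cons.prems q by auto
    have "internal q \<inter> internal p = {}" using Cons.prems(5) q pnot by (metis list.set_intros(1,2))
    then show "set q \<inter> I = {}" using ispth_facts[OF qq Cons.prems(2)] pf unfolding I_def by auto
  qed
  define g' where "g' x = g x * (\<Prod>q\<leftarrow>ps. pathw t t x u (tl q))" for x
  have "(\<Sum>x\<in>configs V. g x * (\<Prod>q\<leftarrow>p#ps. pathw t t x u (tl q)))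
      = (\<Sum>x\<in>configs V. g' x * pathw t t x u (tl p))"
    unfolding g'_def by (simp add: algebra_simps)
  also have "\<dots> = 2^(length (tl p) - 1) * (\<Sum>x\<in>configs (V - set (butlast (tl p))).
        g' x * (1 + t * t^(length (tl p) - 1) * (x u * x (last (tl p)))))"
  proof (rule path_elim)
    show "finite V" using Cons.prems by auto
    show "distinct (u # tl p)" "tl p \<noteq> []" using pf by auto
    show "set (u # tl p) \<subseteq> V" using pf pp unfolding ispth_def by auto
    show "\<forall>x y \<sigma>. y \<in> set (butlast (tl p)) \<longrightarrow> g' (x(y := \<sigma>)) = g' x"
    proof (intro allI impI)
      fix x y \<sigma> assume y: "y \<in> set (butlast (tl p))"
      then have yI: "y \<in> I" unfolding I_def internal_def .
      have "y \<in> (\<Union>p\<in>set (p#ps). internal p)" using yI unfolding I_def by auto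
      then have "g (x(y := \<sigma>)) = g x" using Cons.prems(6) by blast
      moreover have "(\<Prod>q\<leftarrow>ps. pathw t t (x(y := \<sigma>)) u (tl q)) = (\<Prod>q\<leftarrow>ps. pathw t t x u (tl q))"
      proof (intro arg_cong[where f=prod_list] map_cong refl pathw_upd)
        fix q assume q: "q \<in> set ps"
        have qq: "ispth V u v q" using Cons.prems q by auto
        show "y \<notin> set (u # tl q)" using qfacts[OF q] yI ispth_facts(7)[OF qq Cons.prems(2)] by auto
      qed
      ultimately show "g' (x(y := \<sigma>)) = g' x" unfolding g'_def by simp
    qed
  qed
  also have "\<dots> = 2^(length p - 2) * (\<Sum>x\<in>configs (V - I). g' x * (1 + t^(length p - 1) * (x u * x v)))"
  proof -
    have "length p - 1 = Suc (length (tl p) - 1)" using pf(8) by simp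
    then have "t * t^(length (tl p) - 1) = t^(length p - 1)" by simp
    moreover have "length (tl p) - 1 = length p - 2" by simp
    ultimately show ?thesis using pf(5) unfolding I_def internal_def by simp
  qed
  also have "(\<Sum>x\<in>configs (V - I). g' x * (1 + t^(length p - 1) * (x u * x v)))
      = (\<Sum>x\<in>configs (V - I). (g x * (1 + t^(length p - 1) * (x u * x v))) * (\<Prod>q\<leftarrow>ps. pathw t t x u (tl q)))"
    unfolding g'_def by (simp add: algebra_simps)
  also have "\<dots> = 2^(\<Sum>q\<leftarrow>ps. length q - 2) * (\<Sum>x\<in>configs (V - I - J).
            (g x * (1 + t^(length p - 1) * (x u * x v))) * (\<Prod>q\<leftarrow>ps. 1 + t^(length q - 1) * (x u * x v)))"
    unfolding J_def
  proof (rule Cons.IH)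
    show "finite (V - I)" using Cons.prems by auto
    show "u \<noteq> v" by fact
    show "distinct ps" using Cons.prems by auto
    show "\<forall>q\<in>set ps. ispth (V - I) u v q"
      using Cons.prems(4) qfacts unfolding ispth_def by auto
    show "\<forall>pa\<in>set ps. \<forall>q\<in>set ps. pa \<noteq> q \<longrightarrow> internal pa \<inter> internal q = {}"
      using Cons.prems(5) by auto
    show "\<forall>x y \<sigma>. y \<in> (\<Union>p\<in>set ps. internal p) \<longrightarrow>
        g (x(y := \<sigma>)) * (1 + t ^ (length p - 1) * ((x(y := \<sigma>)) u * (x(y := \<sigma>)) v)) =
        g x * (1 + t ^ (length p - 1) * (x u * x v))"
    proof (intro allI impI)
      fix x y \<sigma> assume y: "y \<in> (\<Union>p\<in>set ps. internal p)"
      then obtain q where q: "q \<in> set ps" "y \<in> internal q" by auto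
      have qq: "ispth V u v q" using Cons.prems q by auto
      have "y \<noteq> u" "y \<noteq> v" using ispth_facts(1,2)[OF qq Cons.prems(2)] q by auto
      moreover have "y \<in> (\<Union>p\<in>set (p#ps). internal p)" using y by auto
      then have "g (x(y := \<sigma>)) = g x" using Cons.prems(6) by blast
      moreover note \<open>y \<noteq> u\<close> \<open>y \<noteq> v\<close>
      ultimately show "g (x(y := \<sigma>)) * (1 + t ^ (length p - 1) * ((x(y := \<sigma>)) u * (x(y := \<sigma>)) v)) =
        g x * (1 + t ^ (length p - 1) * (x u * x v))" by simp
    qed
  qed
  finally have F: "(\<Sum>x\<in>configs V. g x * (\<Prod>q\<leftarrow>p#ps. pathw t t x u (tl q))) =
    2 ^ (length p - 2) * (2 ^ (\<Sum>q\<leftarrow>ps. length q - 2) * (\<Sum>x\<in>configs (V - I - J).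
        g x * (1 + t ^ (length p - 1) * (x u * x v)) * (\<Prod>q\<leftarrow>ps. 1 + t ^ (length q - 1) * (x u * x v))))" .
  have eqs: "V - I - J = V - (\<Union>q\<in>set (p#ps). internal q)" unfolding I_def J_def by auto
  show ?case unfolding F eqs[symmetric] by (simp add: power_add algebra_simps)
qed

lemma card_configs: "finite S \<Longrightarrow> card (configs S) = 2 ^ card S"
  unfolding configs_def by (simp add: card_PiE numeral_2_eq_2)

lemma sum_uv:
  fixes h :: "real \<Rightarrow> real"
  assumes "finite R" "u \<in> R" "v \<in> R" "u \<noteq> v"
  shows "(\<Sum>x\<in>configs R. h (x u * x v)) = 2^(card R - 1) * (h 1 + h (-1))"
proof -
  have vR: "v \<in> R - {u}" using assms by auto
  have "(\<Sum>x\<in>configs R. h (x u * x v)) = (\<Sum>x\<in>configs (R - {u}). h (x v) + h (- x v))"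
    unfolding sum_configs_elim[OF assms(1,2)] using assms by simp
  also have "\<dots> = (\<Sum>x\<in>configs (R - {u} - {v}). 2 * (h 1 + h (-1)))"
  proof -
    have "(\<Sum>x\<in>configs (R - {u}). h (x v) + h (- x v))
        = (\<Sum>x\<in>configs (R - {u} - {v}). h ((x(v:=1)) v) + h (- (x(v:=1)) v) + (h ((x(v:=-1)) v) + h (- (x(v:=-1)) v)))"
      by (rule sum_configs_elim) (use assms vR in auto)
    also have "\<dots> = (\<Sum>x\<in>configs (R - {u} - {v}). 2 * (h 1 + h (-1)))" by simp
    finally show ?thesis .
  qed
  also have "\<dots> = 2 ^ card (R - {u} - {v}) * (2 * (h 1 + h (-1)))"
    using assms by (simp add: card_configs)
  also have "card (R - {u} - {v}) = card R - 2" using assms by (simp add: card_Diff_singleton_if)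
  also have "(2::real) ^ (card R - 2) * (2 * (h 1 + h (-1))) = 2^(card R - 1) * (h 1 + h (-1))"
  proof -
    have "card {u,v} \<le> card R" using assms by (intro card_mono) auto
    then have "card R \<ge> 2" using assms by simp
    then have "card R - 1 = Suc (card R - 2)" by simp
    then show ?thesis by simp
  qed
  finally show ?thesis .
qed

fun pedg :: "'a list \<Rightarrow> 'a set set" where
  "pedg (a#b#r) = insert {a,b} (pedg (b#r))"
| "pedg _ = {}"

lemma pedg_sub: "e \<in> pedg p \<Longrightarrow> \<exists>a b. a \<in> set p \<and> b \<in> set p \<and> e = {a,b} \<and> (distinct p \<longrightarrow> a \<noteq> b)"
  by (induction p rule: pedg.induct) auto

lemma pedg_idx: "e \<in> pedg p \<Longrightarrow> \<exists>i. Suc i < length p \<and> e = {p!i, p!Suc i}"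
proof (induction p rule: pedg.induct)
  case (1 a b r)
  show ?case
  proof (cases "e = {a,b}")
    case True then show ?thesis by (intro exI[of _ 0]) auto
  next
    case False
    then have "e \<in> pedg (b#r)" using 1 by auto
    then obtain i where "Suc i < length (b#r)" "e = {(b#r)!i, (b#r)!Suc i}" using 1 by blast
    then show ?thesis by (intro exI[of _ "Suc i"]) auto
  qed
qed auto

lemma finite_pedg: "finite (pedg p)"
  by (induction p rule: pedg.induct) auto

lemma mn_pair: "a \<noteq> b \<Longrightarrow> mn {a,b} x = x a * x b"
  unfolding mn_def by simp

lemma pathw_prod: "distinct (a#ws) \<Longrightarrow> pathw t t x a ws = (\<Prod>e\<in>pedg (a#ws). 1 + t * mn e x)"
proof (induction ws arbitrary: a)
  case Nil then show ?case by simp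
next
  case (Cons b r)
  have nin: "{a,b} \<notin> pedg (b#r)"
  proof
    assume "{a,b} \<in> pedg (b#r)"
    then obtain c d where "c \<in> set (b#r)" "d \<in> set (b#r)" "{a,b} = {c,d}" using pedg_sub by blast
    then have "a \<in> set (b#r)" by (metis insertI1 insert_iff singletonD)
    then show False using Cons.prems by simp
  qed
  have ab: "a \<noteq> b" using Cons.prems by auto
  have IH: "pathw t t x b r = (\<Prod>e\<in>pedg (b#r). 1 + t * mn e x)" using Cons.IH Cons.prems by simp
  have "(\<Prod>e\<in>pedg (a#b#r). 1 + t * mn e x) = (1 + t * mn {a,b} x) * (\<Prod>e\<in>pedg (b#r). 1 + t * mn e x)"
    using nin finite_pedg[of "b#r"] by simp
  then show ?case using IH ab by (simp add: mn_pair)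
qed

lemma exp_cosh_tanh: "s = 1 \<or> s = -1 \<Longrightarrow> exp (lam * s) = cosh lam * (1 + tanh lam * (s::real))"
  using exp_pm[of s lam] by (simp add: tanh_def field_simps)

lemma corr_paths:
  assumes V: "finite V" and uv: "u \<noteq> v" and uvV: "u \<in> V" "v \<in> V" and dps: "distinct ps"
    and pth: "\<forall>p\<in>set ps. ispth V u v p"
    and disj: "\<forall>p\<in>set ps. \<forall>q\<in>set ps. p \<noteq> q \<longrightarrow> internal p \<inter> internal q = {}"
    and nuv: "\<forall>p\<in>set ps. {u,v} \<notin> pedg p"
  shows "corr V (\<Union>p\<in>set ps. pedg p) lam {u,v}
     = ((\<Prod>p\<leftarrow>ps. 1 + tanh lam ^ (length p - 1)) - (\<Prod>p\<leftarrow>ps. 1 - tanh lam ^ (length p - 1)))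
     / ((\<Prod>p\<leftarrow>ps. 1 + tanh lam ^ (length p - 1)) + (\<Prod>p\<leftarrow>ps. 1 - tanh lam ^ (length p - 1)))"
proof -
  define t where "t = tanh lam"
  define H where "H = (\<Union>p\<in>set ps. pedg p)"
  have finH: "finite H" unfolding H_def using finite_pedg by auto
  have edgeV: "e \<subseteq> V" "finite e" if eH: "e \<in> H" for e
  proof -
    obtain p where p: "p \<in> set ps" "e \<in> pedg p" using eH unfolding H_def by auto
    obtain a b where "a \<in> set p" "b \<in> set p" "e = {a,b}" using pedg_sub[OF p(2)] by blast
    then show "e \<subseteq> V" "finite e" using pth p unfolding ispth_def by auto
  qed
  have pdisj: "\<forall>p\<in>set ps. \<forall>q\<in>set ps. p \<noteq> q \<longrightarrow> pedg p \<inter> pedg q = {}"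
  proof (intro ballI impI)
    fix p q assume p: "p \<in> set ps" and q: "q \<in> set ps" and pq: "p \<noteq> q"
    show "pedg p \<inter> pedg q = {}"
    proof (rule ccontr)
      assume "pedg p \<inter> pedg q \<noteq> {}"
      then obtain e where e: "e \<in> pedg p" "e \<in> pedg q" by auto
      have pp: "ispth V u v p" and qq: "ispth V u v q" using pth p q by auto
      obtain a b where ab: "a \<in> set p" "b \<in> set p" "e = {a,b}" "a \<noteq> b"
        using pedg_sub[OF e(1)] pp unfolding ispth_def by blast
      have "e \<subseteq> set q" using pedg_sub[OF e(2)] by blast
      then have "a \<in> set q" "b \<in> set q" using ab by auto
      moreover have "internal p \<inter> internal q = {}" using disj p q pq by auto
      ultimately have "a \<in> {u,v}" "b \<in> {u,v}"
        using ab ispth_facts(3)[OF pp uv] ispth_facts(3)[OF qq uv] by auto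
      then have "e = {u,v}" using ab by auto
      then show False using nuv p e by auto
    qed
  qed
  have W: "exp (ising_energy H lam x) = cosh lam ^ card H * (\<Prod>p\<leftarrow>ps. pathw t t x u (tl p))"
    if x: "x \<in> configs V" for x
  proof -
    have "exp (ising_energy H lam x) = (\<Prod>e\<in>H. exp (lam * mn e x))"
      unfolding energy_mn using finH by (simp add: exp_sum)
    also have "\<dots> = (\<Prod>e\<in>H. cosh lam * (1 + t * mn e x))"
    proof (rule prod.cong[OF refl])
      fix e assume e: "e \<in> H"
      have "mn e x = 1 \<or> mn e x = -1" using mn_pm1[OF x edgeV[OF e]] .
      then show "exp (lam * mn e x) = cosh lam * (1 + t * mn e x)" unfolding t_def by (rule exp_cosh_tanh)
    qed
    also have "\<dots> = cosh lam ^ card H * (\<Prod>e\<in>H. 1 + t * mn e x)"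
      by (simp add: prod.distrib)
    also have "(\<Prod>e\<in>H. 1 + t * mn e x) = (\<Prod>p\<in>set ps. \<Prod>e\<in>pedg p. 1 + t * mn e x)"
      unfolding H_def by (rule prod.UNION_disjoint) (use finite_pedg pdisj in auto)
    also have "\<dots> = (\<Prod>p\<in>set ps. pathw t t x u (tl p))"
    proof (rule prod.cong[OF refl])
      fix p assume p: "p \<in> set ps"
      have pp: "ispth V u v p" using pth p by auto
      have "u # tl p = p" using pp unfolding ispth_def by (cases p) auto
      then show "(\<Prod>e\<in>pedg p. 1 + t * mn e x) = pathw t t x u (tl p)"
        using pathw_prod[OF ispth_facts(6)[OF pp uv], of t x] by simp
    qed
    also have "\<dots> = (\<Prod>p\<leftarrow>ps. pathw t t x u (tl p))"
      using dps by (simp add: prod.distinct_set_conv_list)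
    finally show ?thesis .
  qed
  define I where "I = (\<Union>p\<in>set ps. internal p)"
  define R where "R = V - I"
  define K where "K = (\<Sum>p\<leftarrow>ps. length p - 2)"
  define cst where "cst = cosh lam ^ card H * 2 ^ K * 2 ^ (card R - 1)"
  have uvR: "u \<in> R" "v \<in> R" "finite R"
  proof -
    have "u \<notin> I" "v \<notin> I" using ispth_facts(1,2)[OF _ uv] pth unfolding I_def by auto
    moreover note uvV
    ultimately show "u \<in> R" "v \<in> R" unfolding R_def by auto
    show "finite R" unfolding R_def using V by auto
  qed
  have gen: "Zs V H lam g = cst * (h 1 + h (-1))"
    if g: "\<forall>x y \<sigma>. y \<in> I \<longrightarrow> g (x(y:=\<sigma>)) = g x"
      and gh: "\<forall>x. g x * (\<Prod>p\<leftarrow>ps. 1 + t^(length p - 1) * (x u * x v)) = h (x u * x v)"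
    for g h
  proof -
    have "Zs V H lam g = cosh lam ^ card H * (\<Sum>x\<in>configs V. g x * (\<Prod>p\<leftarrow>ps. pathw t t x u (tl p)))"
      unfolding Zs_def by (simp add: W sum_distrib_left algebra_simps cong: sum.cong)
    also have "(\<Sum>x\<in>configs V. g x * (\<Prod>p\<leftarrow>ps. pathw t t x u (tl p)))
       = 2^K * (\<Sum>x\<in>configs R. g x * (\<Prod>p\<leftarrow>ps. 1 + t^(length p - 1) * (x u * x v)))"
      unfolding K_def R_def I_def
    proof (rule multi_elim[OF V uv dps pth disj])
      show "\<forall>x y \<sigma>. y \<in> (\<Union>p\<in>set ps. internal p) \<longrightarrow> g (x(y := \<sigma>)) = g x"
        using g unfolding I_def .
    qed
    also have "(\<Sum>x\<in>configs R. g x * (\<Prod>p\<leftarrow>ps. 1 + t^(length p - 1) * (x u * x v)))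
        = (\<Sum>x\<in>configs R. h (x u * x v))" using gh by simp
    also have "\<dots> = 2^(card R - 1) * (h 1 + h (-1))" by (rule sum_uv[OF uvR(3) uvR(1) uvR(2) uv])
    finally show ?thesis unfolding cst_def by simp
  qed
  define A' where "A' = (\<Prod>p\<leftarrow>ps. 1 + t ^ (length p - 1))"
  define B' where "B' = (\<Prod>p\<leftarrow>ps. 1 - t ^ (length p - 1))"
  have num: "Zs V H lam (mn {u,v}) = cst * (A' - B')"
  proof -
    have "Zs V H lam (mn {u,v}) = cst * ((\<lambda>s. s * (\<Prod>p\<leftarrow>ps. 1 + t^(length p - 1) * s)) 1
        + (\<lambda>s. s * (\<Prod>p\<leftarrow>ps. 1 + t^(length p - 1) * s)) (-1))"
    proof (rule gen)
      show "\<forall>x y \<sigma>. y \<in> I \<longrightarrow> mn {u, v} (x(y := \<sigma>)) = mn {u, v} x"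
        using uvR unfolding R_def by (auto simp: mn_pair uv)
    qed (simp add: mn_pair uv)
    then show ?thesis unfolding A'_def B'_def by (simp add: algebra_simps)
  qed
  have den: "Zs V H lam (\<lambda>_. 1) = cst * (A' + B')"
  proof -
    have "Zs V H lam (\<lambda>_. 1) = cst * ((\<lambda>s. (\<Prod>p\<leftarrow>ps. 1 + t^(length p - 1) * s)) 1
        + (\<lambda>s. (\<Prod>p\<leftarrow>ps. 1 + t^(length p - 1) * s)) (-1))"
      by (rule gen) auto
    then show ?thesis unfolding A'_def B'_def by (simp add: algebra_simps)
  qed
  have cpos: "cst \<noteq> 0" unfolding cst_def by simp
  show ?thesis unfolding corr_def H_def[symmetric] num den
    using cpos unfolding A'_def B'_def t_def by simp
qed

lemma prod_list_nonneg': "\<forall>c\<in>set cs. (0::real) \<le> f c \<Longrightarrow> 0 \<le> (\<Prod>c\<leftarrow>cs. f c)"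
  by (induction cs) auto

lemma prod_list_pos': "\<forall>c\<in>set cs. (0::real) < f c \<Longrightarrow> 0 < (\<Prod>c\<leftarrow>cs. f c)"
  by (induction cs) auto

lemma prodlist_ineq:
  fixes \<tau> :: real
  assumes "0 \<le> \<tau>" "\<tau> \<le> 1" "\<forall>c\<in>set cs. \<tau> \<le> c \<and> c \<le> 1"
  shows "(1+\<tau>)^length cs * (\<Prod>c\<leftarrow>cs. 1-c) \<le> (\<Prod>c\<leftarrow>cs. 1+c) * (1-\<tau>)^length cs"
  using assms(3)
proof (induction cs)
  case Nil then show ?case by simp
next
  case (Cons c cs)
  have c: "\<tau> \<le> c" "c \<le> 1" using Cons.prems by auto
  have IH: "(1+\<tau>)^length cs * (\<Prod>c\<leftarrow>cs. 1-c) \<le> (\<Prod>c\<leftarrow>cs. 1+c) * (1-\<tau>)^length cs"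
    using Cons by auto
  have nn: "0 \<le> (1+\<tau>)^length cs * (\<Prod>c\<leftarrow>cs. 1-c)"
    using Cons.prems assms(1) by (intro mult_nonneg_nonneg prod_list_nonneg') auto
  have f: "(1+\<tau>) * (1-c) \<le> (1+c) * (1-\<tau>)" using c by (simp add: algebra_simps)
  have f0: "0 \<le> (1+c) * (1-\<tau>)" using c assms by simp
  have "((1+\<tau>) * (1-c)) * ((1+\<tau>)^length cs * (\<Prod>c\<leftarrow>cs. 1-c))
      \<le> ((1+c) * (1-\<tau>)) * ((\<Prod>c\<leftarrow>cs. 1+c) * (1-\<tau>)^length cs)"
    by (rule mult_mono[OF f IH f0 nn])
  then show ?case by (simp add: algebra_simps)
qed

lemma frac_ineq:
  fixes A B A' B' :: real
  assumes "A * B' \<le> A' * B" "A' + B' > 0" "A + B > 0"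
  shows "(A - B) / (A + B) \<le> (A' - B') / (A' + B')"
proof -
  have "(A - B) * (A' + B') \<le> (A' - B') * (A + B)" using assms(1) by (simp add: algebra_simps)
  then show ?thesis using assms(2,3) by (simp add: divide_simps)
qed

lemma corr_le1:
  assumes "finite V" "A \<subseteq> V"
  shows "corr V E lam A \<le> 1"
proof -
  have fA: "finite A" using assms finite_subset by auto
  have "Zs V E lam (mn A) \<le> Zs V E lam (\<lambda>_. 1)"
    unfolding Zs_def
  proof (rule sum_mono)
    fix x assume x: "x \<in> configs V"
    have "mn A x \<le> 1" using mn_pm1[OF x assms(2) fA] by auto
    then show "mn A x * exp (ising_energy E lam x) \<le> 1 * exp (ising_energy E lam x)"
      by (intro mult_right_mono) auto
  qed
  then show ?thesis unfolding corr_def using Zs_pos[OF assms(1)] by simp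
qed

lemma corr_bound:
  assumes G: "graph V E'" and lam: "lam > 0" and nE: "{u,v} \<notin> E'" and uv: "u \<noteq> v"
    and uvV: "u \<in> V" "v \<in> V" and ld: "ld_connected E' l d u v"
  shows "((1 + tanh lam ^ l) ^ d - (1 - tanh lam ^ l) ^ d) / ((1 + tanh lam ^ l) ^ d + (1 - tanh lam ^ l) ^ d)
     \<le> corr V E' lam {u,v}"
proof -
  define t where "t = tanh lam"
  have t: "0 < t" "t < 1" unfolding t_def using lam tanh_real_lt_1 by auto
  obtain ps where ps: "length ps = d" "distinct ps"
      "\<forall>p\<in>set ps. is_path E' u v p \<and> length p - 1 \<le> l"
      "\<forall>i<d. \<forall>j<d. i \<noteq> j \<longrightarrow> internal (ps ! i) \<inter> internal (ps ! j) = {}"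
    using ld unfolding ld_connected_def by blast
  have V: "finite V" and EV: "\<forall>e\<in>E'. e \<subseteq> V" using G unfolding graph_def by auto
  have finE: "finite E'" using V EV by (metis Pow_iff finite_Pow_iff finite_subset subsetI)
  have len2: "length p \<ge> 2" if p: "p \<in> set ps" for p
  proof -
    have "is_path E' u v p" using ps p by auto
    then have "p \<noteq> []" "hd p = u" "last p = v" unfolding is_path_def by auto
    then show ?thesis using uv by (cases p) (auto simp: Suc_le_eq split: if_splits)
  qed
  have pth: "\<forall>p\<in>set ps. ispth V u v p"
  proof
    fix p assume p: "p \<in> set ps"
    have ip: "is_path E' u v p" using ps p by auto
    have "set p \<subseteq> V"
    proof
      fix a assume "a \<in> set p"
      then obtain i where i: "i < length p" "a = p ! i" by (auto simp: in_set_conv_nth)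
      show "a \<in> V"
      proof (cases "Suc i < length p")
        case True
        then have "{p!i, p!Suc i} \<in> E'" using ip unfolding is_path_def by blast
        then show ?thesis using EV i by auto
      next
        case False
        then obtain j where j: "i = Suc j" using len2[OF p] i by (cases i) auto
        then have "{p!j, p!Suc j} \<in> E'" using ip i unfolding is_path_def by blast
        then show ?thesis using EV i j by auto
      qed
    qed
    then show "ispth V u v p" using ip unfolding is_path_def ispth_def by auto
  qed
  have disj: "\<forall>p\<in>set ps. \<forall>q\<in>set ps. p \<noteq> q \<longrightarrow> internal p \<inter> internal q = {}"
  proof (intro ballI impI)
    fix p q assume "p \<in> set ps" "q \<in> set ps" "p \<noteq> q"
    then obtain i j where "i < d" "j < d" "p = ps ! i" "q = ps ! j"
      using ps(1) by (auto simp: in_set_conv_nth)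
    then show "internal p \<inter> internal q = {}" using ps(4) \<open>p \<noteq> q\<close> by blast
  qed
  have pE: "pedg p \<subseteq> E'" if p: "p \<in> set ps" for p
  proof
    fix e assume "e \<in> pedg p"
    then obtain i where "Suc i < length p" "e = {p!i, p!Suc i}" using pedg_idx by blast
    then show "e \<in> E'" using ps p unfolding is_path_def by auto
  qed
  have nuv: "\<forall>p\<in>set ps. {u,v} \<notin> pedg p" using pE nE by auto
  have HE: "(\<Union>p\<in>set ps. pedg p) \<subseteq> E'" using pE by auto
  have mono: "corr V (\<Union>p\<in>set ps. pedg p) lam {u,v} \<le> corr V E' lam {u,v}"
    by (rule corr_mono[OF V finE EV HE]) (use lam uvV in auto)
  define cs where "cs = map (\<lambda>p. t ^ (length p - 1)) ps"
  define \<tau> where "\<tau> = t ^ l"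
  have tau: "0 \<le> \<tau>" "\<tau> \<le> 1" unfolding \<tau>_def using t by (auto intro: power_le_one)
  have cs: "\<forall>c\<in>set cs. \<tau> \<le> c \<and> c \<le> 1"
  proof
    fix c assume "c \<in> set cs"
    then obtain p where p: "p \<in> set ps" "c = t ^ (length p - 1)" unfolding cs_def by auto
    have "length p - 1 \<le> l" using ps p by auto
    then have "t ^ l \<le> t ^ (length p - 1)" using t by (intro power_decreasing) auto
    moreover have "t ^ (length p - 1) \<le> 1" using t by (intro power_le_one) auto
    ultimately show "\<tau> \<le> c \<and> c \<le> 1" using p unfolding \<tau>_def by simp
  qed
  have lc: "length cs = d" unfolding cs_def using ps by simp
  have eqA: "(\<Prod>p\<leftarrow>ps. 1 + t ^ (length p - 1)) = (\<Prod>c\<leftarrow>cs. 1 + c)" unfolding cs_def by (simp add: o_def)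
  have eqB: "(\<Prod>p\<leftarrow>ps. 1 - t ^ (length p - 1)) = (\<Prod>c\<leftarrow>cs. 1 - c)" unfolding cs_def by (simp add: o_def)
  have cp: "corr V (\<Union>p\<in>set ps. pedg p) lam {u,v}
     = ((\<Prod>c\<leftarrow>cs. 1 + c) - (\<Prod>c\<leftarrow>cs. 1 - c)) / ((\<Prod>c\<leftarrow>cs. 1 + c) + (\<Prod>c\<leftarrow>cs. 1 - c))"
    using corr_paths[OF V uv uvV ps(2) pth disj nuv, of lam] unfolding eqA[unfolded t_def] eqB[unfolded t_def] .
  have ineq: "((1+\<tau>)^d - (1-\<tau>)^d) / ((1+\<tau>)^d + (1-\<tau>)^d)
      \<le> ((\<Prod>c\<leftarrow>cs. 1 + c) - (\<Prod>c\<leftarrow>cs. 1 - c)) / ((\<Prod>c\<leftarrow>cs. 1 + c) + (\<Prod>c\<leftarrow>cs. 1 - c))"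
  proof (rule frac_ineq)
    show "(1+\<tau>)^d * (\<Prod>c\<leftarrow>cs. 1 - c) \<le> (\<Prod>c\<leftarrow>cs. 1 + c) * (1-\<tau>)^d"
      using prodlist_ineq[OF tau cs] lc by simp
    have "0 < (\<Prod>c\<leftarrow>cs. 1 + c)" using cs tau by (intro prod_list_pos') auto
    moreover have "0 \<le> (\<Prod>c\<leftarrow>cs. 1 - c)" using cs by (intro prod_list_nonneg') auto
    ultimately show "0 < (\<Prod>c\<leftarrow>cs. 1 + c) + (\<Prod>c\<leftarrow>cs. 1 - c)" by simp
    have "0 < (1+\<tau>)^d" using tau by simp
    moreover have "0 \<le> (1-\<tau>)^d" using tau by simp
    ultimately show "0 < (1+\<tau>)^d + (1-\<tau>)^d" by simp
  qed
  show ?thesis using ineq mono cp unfolding \<tau>_def t_def by simp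
qed

lemma lin_exp:
  fixes P :: "('a \<Rightarrow> real) \<Rightarrow> real"
  assumes "finite C"
  shows "(\<Sum>x\<in>C. P x * (lam * (\<Sum>e\<in>A. mn e x) - lam * (\<Sum>e\<in>B. mn e x)))
       = lam * (\<Sum>e\<in>A. \<Sum>x\<in>C. P x * mn e x) - lam * (\<Sum>e\<in>B. \<Sum>x\<in>C. P x * mn e x)"
proof -
  have "(\<Sum>x\<in>C. P x * (lam * (\<Sum>e\<in>A. mn e x) - lam * (\<Sum>e\<in>B. mn e x)))
      = (\<Sum>x\<in>C. lam * (\<Sum>e\<in>A. P x * mn e x)) - (\<Sum>x\<in>C. lam * (\<Sum>e\<in>B. P x * mn e x))"
    by (simp add: sum_subtractf[symmetric] sum_distrib_left algebra_simps)
  also have "\<dots> = lam * (\<Sum>x\<in>C. \<Sum>e\<in>A. P x * mn e x) - lam * (\<Sum>x\<in>C. \<Sum>e\<in>B. P x * mn e x)"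
    by (simp add: sum_distrib_left)
  also have "\<dots> = lam * (\<Sum>e\<in>A. \<Sum>x\<in>C. P x * mn e x) - lam * (\<Sum>e\<in>B. \<Sum>x\<in>C. P x * mn e x)"
    by (simp add: sum.swap[of _ C])
  finally show ?thesis .
qed

lemma KL_le:
  assumes V: "finite V" and E: "finite E" and E': "finite E'"
  shows "KL V (ising V E lam) (ising V E' lam)
    \<le> lam * (\<Sum>e\<in>E - E'. corr V E lam e - corr V E' lam e) + lam * (\<Sum>e\<in>E' - E. corr V E' lam e - corr V E lam e)"
proof -
  define C where "C = configs V"
  have fC: "finite C" unfolding C_def using finite_configs[OF V] .
  define H1 where "H1 x = ising_energy E lam x" for x
  define H2 where "H2 x = ising_energy E' lam x" for x
  define Z1 where "Z1 = Zs V E lam (\<lambda>_. 1)"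
  define Z2 where "Z2 = Zs V E' lam (\<lambda>_. 1)"
  have Z1p: "Z1 > 0" and Z2p: "Z2 > 0" unfolding Z1_def Z2_def using Zs_pos[OF V] by auto
  define P where "P x = exp (H1 x) / Z1" for x
  define Q where "Q x = exp (H2 x) / Z2" for x
  have fP: "ising V E lam = P" unfolding ising_def P_def H1_def Z1_def Zs_def partition_fn_def by (rule ext) simp
  have fQ: "ising V E' lam = Q" unfolding ising_def Q_def H2_def Z2_def Zs_def partition_fn_def by (rule ext) simp
  have Z1s: "Z1 = (\<Sum>x\<in>C. exp (H1 x))" unfolding Z1_def Zs_def C_def H1_def by simp
  have Z2s: "Z2 = (\<Sum>x\<in>C. exp (H2 x))" unfolding Z2_def Zs_def C_def H2_def by simp
  have sP: "(\<Sum>x\<in>C. P x) = 1" unfolding P_def using Z1p by (simp add: sum_divide_distrib[symmetric] Z1s[symmetric])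
  have sQ: "(\<Sum>x\<in>C. Q x) = 1" unfolding Q_def using Z2p by (simp add: sum_divide_distrib[symmetric] Z2s[symmetric])
  define D where "D x = H1 x - H2 x" for x
  have Dx: "D x = lam * (\<Sum>e\<in>E - E'. mn e x) - lam * (\<Sum>e\<in>E' - E. mn e x)" for x
  proof -
    have "H1 x = (\<Sum>e\<in>E \<inter> E'. lam * mn e x) + (\<Sum>e\<in>E - E'. lam * mn e x)"
      unfolding H1_def energy_mn using sum.Int_Diff[OF E] by blast
    moreover have "H2 x = (\<Sum>e\<in>E' \<inter> E. lam * mn e x) + (\<Sum>e\<in>E' - E. lam * mn e x)"
      unfolding H2_def energy_mn using sum.Int_Diff[OF E'] by blast
    moreover have "E' \<inter> E = E \<inter> E'" by auto
    ultimately show ?thesis unfolding D_def by (simp add: sum_distrib_left)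
  qed
  have KLeq: "KL V (ising V E lam) (ising V E' lam) = (\<Sum>x\<in>C. P x * D x) + (ln Z2 - ln Z1)"
  proof -
    have lnq: "ln (P x / Q x) = D x + (ln Z2 - ln Z1)" for x
    proof -
      have "P x / Q x = exp (D x) * (Z2 / Z1)"
        unfolding P_def Q_def D_def using Z1p Z2p by (simp add: exp_diff field_simps)
      then show ?thesis using Z1p Z2p by (simp add: ln_mult ln_div)
    qed
    have "KL V (ising V E lam) (ising V E' lam) = (\<Sum>x\<in>C. P x * (D x + (ln Z2 - ln Z1)))"
      unfolding KL_def fP fQ C_def by (intro sum.cong refl) (simp only: lnq)
    also have "\<dots> = (\<Sum>x\<in>C. P x * D x + P x * (ln Z2 - ln Z1))"
      by (simp only: distrib_left)
    also have "\<dots> = (\<Sum>x\<in>C. P x * D x) + (ln Z2 - ln Z1)"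
      by (simp add: sum.distrib sum_distrib_right[symmetric] sP)
    finally show ?thesis .
  qed
  define m where "m = (\<Sum>x\<in>C. Q x * D x)"
  have jensen: "m \<le> ln Z1 - ln Z2"
  proof -
    have "(\<Sum>x\<in>C. Q x * exp (D x)) = Z1 / Z2"
      unfolding Q_def D_def Z1s using Z2p by (simp add: exp_diff sum_divide_distrib)
    moreover have "exp m \<le> (\<Sum>x\<in>C. Q x * exp (D x))"
    proof -
      have "(\<Sum>x\<in>C. Q x * (exp m * (1 + (D x - m)))) \<le> (\<Sum>x\<in>C. Q x * exp (D x))"
      proof (rule sum_mono)
        fix x
        have "exp m * (1 + (D x - m)) \<le> exp m * exp (D x - m)"
          by (intro mult_left_mono exp_ge_add_one_self) auto
        also have "\<dots> = exp (D x)" by (simp add: exp_diff)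
        finally show "Q x * (exp m * (1 + (D x - m))) \<le> Q x * exp (D x)"
          unfolding Q_def using Z2p by (intro mult_left_mono) auto
      qed
      moreover have "(\<Sum>x\<in>C. Q x * (exp m * (1 + (D x - m))))
          = exp m * (\<Sum>x\<in>C. Q x) + exp m * (\<Sum>x\<in>C. Q x * D x) - exp m * m * (\<Sum>x\<in>C. Q x)"
        by (simp add: algebra_simps sum.distrib sum_subtractf sum_distrib_left)
      ultimately show ?thesis using sQ unfolding m_def[symmetric] by simp
    qed
    ultimately have "exp m \<le> Z1 / Z2" by simp
    then have "m \<le> ln (Z1 / Z2)" using Z1p Z2p by (simp add: ln_ge_iff)
    then show ?thesis using Z1p Z2p by (simp add: ln_div)
  qed
  have cP: "(\<Sum>x\<in>C. P x * mn e x) = corr V E lam e" for e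
    unfolding corr_def Zs_def P_def C_def Z1_def H1_def by (simp add: sum_divide_distrib mult.commute Zs_def)
  have cQ: "(\<Sum>x\<in>C. Q x * mn e x) = corr V E' lam e" for e
    unfolding corr_def Zs_def Q_def C_def Z2_def H2_def by (simp add: sum_divide_distrib mult.commute Zs_def)
  have "KL V (ising V E lam) (ising V E' lam) \<le> (\<Sum>x\<in>C. P x * D x) - m"
    using KLeq jensen by simp
  also have "(\<Sum>x\<in>C. P x * D x) = lam * (\<Sum>e\<in>E - E'. corr V E lam e) - lam * (\<Sum>e\<in>E' - E. corr V E lam e)"
    unfolding Dx lin_exp[OF fC] cP ..
  also have "m = lam * (\<Sum>e\<in>E - E'. corr V E' lam e) - lam * (\<Sum>e\<in>E' - E. corr V E' lam e)"
    unfolding m_def Dx lin_exp[OF fC] cQ ..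
  finally show ?thesis by (simp add: algebra_simps sum_subtractf)
qed

lemma final_alg:
  fixes lam N Aq Bq :: real
  assumes "lam \<ge> 0" "N \<ge> 0" "Aq > 0" "Bq \<ge> 0"
  shows "lam * N * (1 - (Aq - Bq) / (Aq + Bq)) \<le> 2 * lam * N / (1 + Aq / Bq)"
proof (cases "Bq = 0")
  case True
  then show ?thesis using assms by simp
next
  case False
  then have "Bq > 0" using assms by simp
  then have "lam * N * (1 - (Aq - Bq) / (Aq + Bq)) = 2 * lam * N / (1 + Aq / Bq)"
    using assms by (simp add: field_simps)
  then show ?thesis by simp
qed

lemma edge_term:
  assumes G: "graph V E" and G': "graph V E'" and lam: "lam > 0" and e: "e \<in> E - E'"
    and conn: "\<forall>e\<in>E - E'. \<forall>u v. e = {u, v} \<longrightarrow> ld_connected E' l d u v"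
  shows "corr V E lam e - corr V E' lam e
     \<le> 1 - ((1 + tanh lam ^ l) ^ d - (1 - tanh lam ^ l) ^ d) / ((1 + tanh lam ^ l) ^ d + (1 - tanh lam ^ l) ^ d)"
proof -
  have V: "finite V" and eV: "e \<subseteq> V" "card e = 2" using G e unfolding graph_def by auto
  obtain u v where uv: "e = {u,v}" "u \<noteq> v" using eV(2) by (auto simp: card_2_iff)
  have uvV: "u \<in> V" "v \<in> V" using uv eV by auto
  have ld: "ld_connected E' l d u v" using conn e uv by blast
  have nE: "{u,v} \<notin> E'" using e uv by auto
  have "((1 + tanh lam ^ l) ^ d - (1 - tanh lam ^ l) ^ d) / ((1 + tanh lam ^ l) ^ d + (1 - tanh lam ^ l) ^ d)
     \<le> corr V E' lam {u,v}"
    by (rule corr_bound[OF G' lam nE uv(2) uvV ld])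
  moreover have "corr V E lam e \<le> 1" by (rule corr_le1[OF V eV(1)])
  ultimately show ?thesis using uv by simp
qed

theorem corollary3:
  fixes V :: "'a set" and E E' :: "'a set set" and lam :: real and l d :: nat
  assumes "graph V E" and "graph V E'" and "lam > 0"
    and "\<forall>e\<in>E - E'. \<forall>u v. e = {u, v} \<longrightarrow> ld_connected E' l d u v"
    and "\<forall>e\<in>E' - E. \<forall>u v. e = {u, v} \<longrightarrow> ld_connected E l d u v"
  shows "KL V (ising V E lam) (ising V E' lam)
     \<le> 2 * lam * real (card ((E - E') \<union> (E' - E)))
        / (1 + (1 + tanh lam ^ l) ^ d / (1 - tanh lam ^ l) ^ d)"
proof -
  define Aq where "Aq = (1 + tanh lam ^ l) ^ d"
  define Bq where "Bq = (1 - tanh lam ^ l) ^ d"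
  define c where "c = (Aq - Bq) / (Aq + Bq)"
  have V: "finite V" and EV: "\<forall>e\<in>E. e \<subseteq> V" and E'V: "\<forall>e\<in>E'. e \<subseteq> V"
    using assms(1,2) unfolding graph_def by auto
  have finE: "finite E" using V EV by (metis Pow_iff finite_Pow_iff finite_subset subsetI)
  have finE': "finite E'" using V E'V by (metis Pow_iff finite_Pow_iff finite_subset subsetI)
  have tl: "0 \<le> tanh lam ^ l" "tanh lam ^ l \<le> 1" using assms(3) tanh_real_lt_1[of lam]
    by (auto intro: power_le_one)
  have AB: "Aq > 0" "Bq \<ge> 0" unfolding Aq_def Bq_def using tl by auto
  have t1: "\<And>e. e \<in> E - E' \<Longrightarrow> corr V E lam e - corr V E' lam e \<le> 1 - c"
    unfolding c_def Aq_def Bq_def by (rule edge_term[OF assms(1,2,3) _ assms(4)])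
  have t2: "\<And>e. e \<in> E' - E \<Longrightarrow> corr V E' lam e - corr V E lam e \<le> 1 - c"
    unfolding c_def Aq_def Bq_def by (rule edge_term[OF assms(2,1,3) _ assms(5)])
  have s1: "(\<Sum>e\<in>E - E'. corr V E lam e - corr V E' lam e) \<le> real (card (E - E')) * (1 - c)"
    using t1 by (rule sum_bounded_above)
  have s2: "(\<Sum>e\<in>E' - E. corr V E' lam e - corr V E lam e) \<le> real (card (E' - E)) * (1 - c)"
    using t2 by (rule sum_bounded_above)
  have lam0: "lam \<ge> 0" using assms(3) by simp
  have "KL V (ising V E lam) (ising V E' lam)
    \<le> lam * (\<Sum>e\<in>E - E'. corr V E lam e - corr V E' lam e) + lam * (\<Sum>e\<in>E' - E. corr V E' lam e - corr V E lam e)"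
    by (rule KL_le[OF V finE finE'])
  also have "\<dots> \<le> lam * (real (card (E - E')) * (1 - c)) + lam * (real (card (E' - E)) * (1 - c))"
    by (intro add_mono mult_left_mono s1 s2 lam0)
  also have "\<dots> = lam * real (card ((E - E') \<union> (E' - E))) * (1 - c)"
  proof -
    have "card ((E - E') \<union> (E' - E)) = card (E - E') + card (E' - E)"
      by (rule card_Un_disjoint) (use finE finE' in auto)
    then show ?thesis by (simp add: algebra_simps)
  qed
  also have "\<dots> \<le> 2 * lam * real (card ((E - E') \<union> (E' - E))) / (1 + Aq / Bq)"
    unfolding c_def by (rule final_alg[OF lam0 _ AB]) simp
  finally show ?thesis unfolding Aq_def Bq_def .
qed

end
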